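(* For all odd integers $n\ge1$ and real numbers $a\ge1$, $x\in(0,\pi)$, we have $S_{n,a}(x)\ge\sin(x)$. Equality holds if and only if $n=1$, or $n=3$, $a=1$, $x=2\pi/3$.
   Context: For a real number $a$ and integers $0\le m$, $\binom{m+a}{m}=\frac{(a+1)(a+2)\cdots(a+m)}{m!}$ (equal to $1$ when $m=0$). For an integer $n\ge1$, $S_{n,a}(x)=\sum_{j=1}^n\binom{n+a-j}{n-j}\sin(jx)$. *)

theory Defs
  imports "HOL-Analysis.Analysis"
begin

text \<open>binom m a = (a+1)(a+2)...(a+m)/m!, i.e. the binomial coefficient (m+a choose m).\<close>
definition binom :: "nat \<Rightarrow> real \<Rightarrow> real" where
  "binom m a = (\<Prod>i=1..m. a + real i) / fact m"

definition S :: "nat \<Rightarrow> real \<Rightarrow> real \<Rightarrow> real" where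
  "S n a x = (\<Sum>j=1..n. binom (n - j) a * sin (real j * x))"

end

theory Submission
  imports Defs
begin

lemma binom_0 [simp]: "binom 0 a = 1"
  by (simp add: binom_def)

lemma prod_shift1: "(\<Prod>i=1..Suc k. a - 1 + real i) = a * (\<Prod>i=1..k. a + real i)"
proof (induction k)
  case 0 then show ?case by simp
next
  case (Suc k)
  have "(\<Prod>i=1..Suc (Suc k). a - 1 + real i) = (a - 1 + real (Suc (Suc k))) * (\<Prod>i=1..Suc k. a - 1 + real i)"
    by (simp add: prod.nat_ivl_Suc')
  also have "\<dots> = (a + real (Suc k)) * (a * (\<Prod>i=1..k. a + real i))" using Suc by simp
  also have "\<dots> = a * (\<Prod>i=1..Suc k. a + real i)" by (simp add: prod.nat_ivl_Suc')
  finally show ?case .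
qed

lemma binom_pascal: "binom (Suc k) a = binom (Suc k) (a - 1) + binom k a"
proof -
  define P where "P = (\<Prod>i=1..k. a + real i)"
  have fk: "fact (Suc k) = real (Suc k) * fact k" by simp
  have fpos: "(fact k :: real) > 0" by simp
  have "binom (Suc k) a = P * (a + real (Suc k)) / fact (Suc k)"
    unfolding binom_def P_def by (simp add: prod.nat_ivl_Suc' mult.commute)
  moreover have "binom (Suc k) (a - 1) = a * P / fact (Suc k)"
    unfolding binom_def P_def using prod_shift1 by simp
  moreover have "binom k a = P * real (Suc k) / fact (Suc k)"
    unfolding binom_def P_def using fpos by (simp add: fk)
  ultimately show ?thesis by (simp add: add_divide_distrib[symmetric] algebra_simps)
qed

lemma binom_hockey: "binom k a = (\<Sum>i=0..k. binom i (a - 1))"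
proof (induction k)
  case 0 then show ?case by simp
next
  case (Suc k) then show ?case using binom_pascal[of k a] by simp
qed

lemma binom_conv: "binom k a = (\<Sum>i=0..k. binom i (a - 2) * real (k - i + 1))"
proof (induction k)
  case 0 then show ?case by simp
next
  case (Suc k)
  have h: "binom (Suc k) (a - 1) = (\<Sum>i=0..Suc k. binom i (a - 2))"
    using binom_hockey[of "Suc k" "a - 1"] by simp
  have "(\<Sum>i=0..Suc k. binom i (a - 2) * real (Suc k - i + 1))
      = (\<Sum>i=0..k. binom i (a - 2) * real (Suc k - i + 1)) + binom (Suc k) (a - 2)" by simp
  also have "(\<Sum>i=0..k. binom i (a - 2) * real (Suc k - i + 1))
      = (\<Sum>i=0..k. binom i (a - 2) * real (k - i + 1)) + (\<Sum>i=0..k. binom i (a - 2))"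
    by (simp add: sum.distrib[symmetric] Suc_diff_le algebra_simps)
  finally show ?case using Suc h binom_pascal[of k a] by simp
qed

lemma binom_nonneg: "a \<ge> 1 \<Longrightarrow> binom k (a - 2) \<ge> 0"
  unfolding binom_def by (intro divide_nonneg_pos prod_nonneg) auto

lemma binom_1: "binom 1 b = b + 1"
  by (simp add: binom_def)

definition F :: "nat \<Rightarrow> real \<Rightarrow> real" where
  "F m x = (\<Sum>j=1..m. real (m + 1 - j) * sin (real j * x))"

lemma decomp: "S n a x = (\<Sum>i=0..n. binom i (a - 2) * F (n - i) x)"
proof -
  let ?h = "\<lambda>j i. binom i (a - 2) * real (n - j - i + 1) * sin (real j * x)"
  have "S n a x = (\<Sum>j\<in>{1..n}. \<Sum>i\<in>{i. i \<in> {0..n} \<and> i + j \<le> n}. ?h j i)"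
    unfolding S_def
  proof (rule sum.cong[OF refl])
    fix j assume j: "j \<in> {1..n}"
    have e: "{i. i \<in> {0..n} \<and> i + j \<le> n} = {0..n-j}" using j by auto
    show "binom (n - j) a * sin (real j * x) = (\<Sum>i\<in>{i. i \<in> {0..n} \<and> i + j \<le> n}. ?h j i)"
      unfolding e binom_conv[of "n - j" a] sum_distrib_right by simp
  qed
  also have "\<dots> = (\<Sum>i\<in>{0..n}. \<Sum>j\<in>{j. j \<in> {1..n} \<and> i + j \<le> n}. ?h j i)"
    by (rule sum.swap_restrict) auto
  also have "\<dots> = (\<Sum>i=0..n. binom i (a - 2) * F (n - i) x)"
  proof (rule sum.cong[OF refl])
    fix i assume i: "i \<in> {0..n}"
    have e: "{j. j \<in> {1..n} \<and> i + j \<le> n} = {1..n-i}" using i by auto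
    show "(\<Sum>j\<in>{j. j \<in> {1..n} \<and> i + j \<le> n}. ?h j i) = binom i (a - 2) * F (n - i) x"
      unfolding e F_def sum_distrib_left
      by (rule sum.cong[OF refl]) (auto simp: algebra_simps)
  qed
  finally show ?thesis .
qed

lemma trig_step: "2 * (1 - cos x) * sin (real (Suc m) * x)
   = 2 * sin (real (Suc m) * x) - sin (real (Suc (Suc m)) * x) - sin (real m * x)"
proof -
  have e1: "real (Suc (Suc m)) * x = real (Suc m) * x + x" by (simp add: algebra_simps)
  have e2: "real m * x = real (Suc m) * x - x" by (simp add: algebra_simps)
  show ?thesis unfolding e1 e2 sin_add sin_diff by (simp add: algebra_simps)
qed

lemma A_sum: "2 * (1 - cos x) * (\<Sum>j=1..m. sin (real j * x))
   = sin x + sin (real m * x) - sin (real (Suc m) * x)"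
proof (induction m)
  case 0 then show ?case by simp
next
  case (Suc m)
  have "2 * (1 - cos x) * (\<Sum>j=1..Suc m. sin (real j * x))
     = 2 * (1 - cos x) * (\<Sum>j=1..m. sin (real j * x)) + 2 * (1 - cos x) * sin (real (Suc m) * x)"
    by (simp add: algebra_simps)
  then show ?case using Suc trig_step[of x m] by simp
qed

lemma F_Suc: "F (Suc m) x = F m x + (\<Sum>j=1..Suc m. sin (real j * x))"
proof -
  have "F (Suc m) x = (\<Sum>j=1..Suc m. real (m + 1 - j) * sin (real j * x) + sin (real j * x))"
    unfolding F_def by (rule sum.cong[OF refl]) (auto simp: Suc_diff_le algebra_simps)
  also have "\<dots> = (\<Sum>j=1..Suc m. real (m + 1 - j) * sin (real j * x)) + (\<Sum>j=1..Suc m. sin (real j * x))"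
    by (simp add: sum.distrib)
  also have "(\<Sum>j=1..Suc m. real (m + 1 - j) * sin (real j * x)) = F m x"
    unfolding F_def by simp
  finally show ?thesis .
qed

lemma F_closed: "2 * (1 - cos x) * F m x = real (Suc m) * sin x - sin (real (Suc m) * x)"
proof (induction m)
  case 0 then show ?case by (simp add: F_def)
next
  case (Suc m)
  have "2 * (1 - cos x) * F (Suc m) x = 2 * (1 - cos x) * F m x + 2 * (1 - cos x) * (\<Sum>j=1..Suc m. sin (real j * x))"
    by (simp add: F_Suc algebra_simps)
  then show ?case using Suc A_sum[of x "Suc m"] by (simp add: algebra_simps)
qed

lemma cos_lt1: "0 < x \<Longrightarrow> x < pi \<Longrightarrow> \<bar>cos x\<bar> < 1"
proof -
  assume "0 < x" "x < pi"
  then have "sin x > 0" by (simp add: sin_gt_zero)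
  then have "(sin x)^2 > 0" by simp
  then have "(cos x)^2 < 1" using sin_cos_squared_add[of x] by linarith
  then show ?thesis by (simp add: abs_square_less_1)
qed

lemma sin_mult_le: "0 < x \<Longrightarrow> x < pi \<Longrightarrow> \<bar>sin (real m * x)\<bar> \<le> real m * sin x"
proof (induction m)
  case 0 then show ?case by simp
next
  case (Suc m)
  have s: "sin x > 0" using Suc by (simp add: sin_gt_zero)
  have e: "real (Suc m) * x = real m * x + x" by (simp add: algebra_simps)
  have "\<bar>sin (real (Suc m) * x)\<bar> \<le> \<bar>sin (real m * x)\<bar> * \<bar>cos x\<bar> + \<bar>cos (real m * x)\<bar> * sin x"
    unfolding e sin_add using s by (metis abs_mult abs_of_pos abs_triangle_ineq)
  also have "\<dots> \<le> real m * sin x * 1 + 1 * sin x"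
    apply (intro add_mono mult_mono)
    using Suc s abs_cos_le_one[of x] abs_cos_le_one[of "real m * x"] by auto
  finally show ?case by (simp add: algebra_simps)
qed

lemma sin_mult_lt: "0 < x \<Longrightarrow> x < pi \<Longrightarrow> m \<ge> 2 \<Longrightarrow> \<bar>sin (real m * x)\<bar> < real m * sin x"
proof -
  assume x: "0 < x" "x < pi" and m: "m \<ge> 2"
  obtain k where k: "m = Suc k" "k \<ge> 1" using m by (cases m) auto
  have s: "sin x > 0" using x by (simp add: sin_gt_zero)
  have c: "\<bar>cos x\<bar> < 1" using cos_lt1 x by blast
  have e: "real (Suc k) * x = real k * x + x" by (simp add: algebra_simps)
  have "\<bar>sin (real (Suc k) * x)\<bar> \<le> \<bar>sin (real k * x)\<bar> * \<bar>cos x\<bar> + \<bar>cos (real k * x)\<bar> * sin x"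
    unfolding e sin_add using s by (metis abs_mult abs_of_pos abs_triangle_ineq)
  also have "\<dots> < real k * sin x + 1 * sin x"
  proof (rule add_less_le_mono)
    have le: "\<bar>sin (real k * x)\<bar> \<le> real k * sin x" using sin_mult_le x by blast
    show "\<bar>sin (real k * x)\<bar> * \<bar>cos x\<bar> < real k * sin x"
    proof (cases "sin (real k * x) = 0")
      case True then show ?thesis using s k by simp
    next
      case False
      then have "\<bar>sin (real k * x)\<bar> * \<bar>cos x\<bar> < \<bar>sin (real k * x)\<bar> * 1"
        using c by (intro mult_strict_left_mono) auto
      then show ?thesis using le by simp
    qed
    show "\<bar>cos (real k * x)\<bar> * sin x \<le> 1 * sin x"
      using s abs_cos_le_one[of "real k * x"] by (intro mult_right_mono) auto
  qed
  finally show ?thesis using k by (simp add: algebra_simps)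
qed

lemma F_pos: "0 < x \<Longrightarrow> x < pi \<Longrightarrow> m \<ge> 1 \<Longrightarrow> F m x > 0"
proof -
  assume x: "0 < x" "x < pi" and m: "m \<ge> 1"
  have "\<bar>sin (real (Suc m) * x)\<bar> < real (Suc m) * sin x" using sin_mult_lt[of x "Suc m"] x m by simp
  then have "2 * (1 - cos x) * F m x > 0" unfolding F_closed by linarith
  moreover have "1 - cos x > 0" using cos_lt1[OF x] by linarith
  ultimately show ?thesis by (simp add: zero_less_mult_iff)
qed

lemma F_nonneg: "0 < x \<Longrightarrow> x < pi \<Longrightarrow> F m x \<ge> 0"
  using F_pos[of x m] by (cases m) (auto simp: F_def)

lemma F_minus: "2 * (1 - cos x) * (F (2*k+1) x - sin x)
   = 2 * real k * sin x - 2 * cos (real (k+2) * x) * sin (real k * x)"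
proof -
  have ct: "cos (real (k+2) * x) * sin (real k * x) = (sin (real (2*k+2) * x) - sin (2 * x)) / 2"
  proof -
    have "real (k+2) * x + real k * x = real (2*k+2) * x" "real (k+2) * x - real k * x = 2 * x"
      by (simp_all add: algebra_simps)
    then show ?thesis by (simp add: cos_times_sin)
  qed
  have "2 * (1 - cos x) * (F (2*k+1) x - sin x) = real (2*k+2) * sin x - sin (real (2*k+2) * x) - 2 * sin x + 2 * sin x * cos x"
    using F_closed[of x "2*k+1"] by (simp add: algebra_simps)
  also have "\<dots> = 2 * real k * sin x + sin (2 * x) - sin (real (2*k+2) * x)"
    using sin_double[of x] by (simp add: algebra_simps)
  finally show ?thesis using ct by simp
qed

lemma F_odd: assumes x: "0 < x" "x < pi"
  shows "F (2*k+1) x \<ge> sin x \<and> (F (2*k+1) x = sin x \<longleftrightarrow> (k = 0 \<or> (k = 1 \<and> x = 2*pi/3)))"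
proof -
  have s: "sin x > 0" using x by (simp add: sin_gt_zero)
  have cpos: "2 * (1 - cos x) > 0" using cos_lt1[OF x] by (simp add: abs_less_iff)
  define G where "G = 2 * real k * sin x - 2 * cos (real (k+2) * x) * sin (real k * x)"
  have FG: "F (2*k+1) x - sin x = G / (2 * (1 - cos x))"
    using F_minus[of x k] cpos unfolding G_def by (simp add: field_simps)
  have b1: "\<bar>cos (real (k+2) * x) * sin (real k * x)\<bar> \<le> \<bar>sin (real k * x)\<bar>"
    using abs_cos_le_one[of "real (k+2) * x"] by (simp add: abs_mult mult_left_le_one_le)
  have Gge: "G \<ge> 0" using sin_mult_le[OF x, of k] b1 unfolding G_def by linarith
  have iff: "F (2*k+1) x = sin x \<longleftrightarrow> G = 0" using FG cpos by auto
  have Gchar: "G = 0 \<longleftrightarrow> (k = 0 \<or> (k = 1 \<and> x = 2*pi/3))"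
  proof (cases "k \<ge> 2")
    case True
    then have "G > 0" using sin_mult_lt[OF x True] b1 unfolding G_def by linarith
    then show ?thesis using True by auto
  next
    case False
    then consider "k = 0" | "k = 1" by linarith
    then show ?thesis
    proof cases
      case 1 then show ?thesis by (simp add: G_def)
    next
      case 2
      then have G1: "G = 2 * sin x * (1 - cos (3 * x))" by (simp add: G_def algebra_simps)
      have "G = 0 \<longleftrightarrow> cos (3 * x) = 1" using G1 s by auto
      also have "\<dots> \<longleftrightarrow> x = 2*pi/3"
      proof
        assume "cos (3 * x) = 1"
        then obtain n :: int where n: "3 * x = n * 2 * pi" by (auto simp: cos_one_2pi_int)
        have m: "real_of_int n * (2*pi) = 3 * x" using n by simp
        have "0 < real_of_int n * (2*pi)" using m x by simp
        then have "0 < real_of_int n" using pi_gt_zero by (simp add: zero_less_mult_iff)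
        moreover have "real_of_int n * (2*pi) < (3/2) * (2*pi)" using m x by simp
        then have "real_of_int n < 3/2" using pi_gt_zero by (simp only: mult_less_cancel_right)
        ultimately have "0 < real_of_int n" "real_of_int n < 3/2" by auto
        then have "n = 1" by linarith
        then show "x = 2*pi/3" using n by simp
      next
        assume "x = 2*pi/3"
        then have "3 * x = 1 * 2 * pi" by simp
        then show "cos (3 * x) = 1" by (simp only: cos_one_2pi_int) (metis of_int_1)
      qed
      finally show ?thesis using 2 by simp
    qed
  qed
  have "G / (2 * (1 - cos x)) \<ge> 0" using Gge cpos by simp
  then have "F (2*k+1) x \<ge> sin x" using FG by linarith
  then show ?thesis using iff Gchar by blast
qed

lemma binom_m1: "i \<ge> 1 \<Longrightarrow> binom i (-1) = 0"
  unfolding binom_def by (subst prod_zero) (auto intro!: bexI[of _ 1])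

theorem theorem3p1:
  fixes n :: nat and a x :: real
  assumes "odd n" and "n \<ge> 1" and "a \<ge> 1" and "0 < x" and "x < pi"
  shows "S n a x \<ge> sin x \<and>
         (S n a x = sin x \<longleftrightarrow> (n = 1 \<or> (n = 3 \<and> a = 1 \<and> x = 2 * pi / 3)))"
proof -
  obtain k where k: "n = 2*k+1" using assms(1) oddE by blast
  define R where "R = (\<Sum>i=1..n. binom i (a - 2) * F (n - i) x)"
  have SR: "S n a x = F n x + R"
    unfolding decomp R_def by (simp add: sum.atLeast_Suc_atMost)
  have Rge: "R \<ge> 0" unfolding R_def
    using binom_nonneg[OF assms(3)] F_nonneg[OF assms(4,5)] by (intro sum_nonneg mult_nonneg_nonneg) auto
  have Fo: "F n x \<ge> sin x \<and> (F n x = sin x \<longleftrightarrow> (k = 0 \<or> (k = 1 \<and> x = 2*pi/3)))"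
    using F_odd[OF assms(4,5), of k] k by simp
  have ge: "S n a x \<ge> sin x" using SR Rge Fo by linarith
  have eq: "S n a x = sin x \<longleftrightarrow> (n = 1 \<or> (n = 3 \<and> a = 1 \<and> x = 2 * pi / 3))"
  proof
    assume e: "S n a x = sin x"
    then have FE: "F n x = sin x" and R0: "R = 0" using SR Rge Fo by linarith+
    then have kc: "k = 0 \<or> (k = 1 \<and> x = 2*pi/3)" using Fo by blast
    show "n = 1 \<or> (n = 3 \<and> a = 1 \<and> x = 2 * pi / 3)"
    proof (cases "k = 0")
      case True then show ?thesis using k by simp
    next
      case False
      then have k1: "k = 1" "x = 2*pi/3" using kc by auto
      then have n3: "n = 3" using k by simp
      have "R = binom 1 (a - 2) * F 2 x + (\<Sum>i=2..3. binom i (a - 2) * F (3 - i) x)"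
        unfolding R_def n3 by (simp add: sum.atLeast_Suc_atMost numeral_3_eq_3 numeral_2_eq_2)
      moreover have "(\<Sum>i=2..3. binom i (a - 2) * F (3 - i) x) \<ge> 0"
        using binom_nonneg[OF assms(3)] F_nonneg[OF assms(4,5)] by (intro sum_nonneg mult_nonneg_nonneg) auto
      moreover have "binom 1 (a - 2) * F 2 x \<ge> 0"
        using binom_nonneg[OF assms(3)] F_nonneg[OF assms(4,5)] by (intro mult_nonneg_nonneg) auto
      ultimately have "binom 1 (a - 2) * F 2 x = 0" using R0 by linarith
      moreover have "F 2 x > 0" using F_pos[OF assms(4,5), of 2] by simp
      ultimately have "a = 1" using binom_1[of "a - 2"] by simp
      then show ?thesis using n3 k1 by simp
    qed
  next
    assume c: "n = 1 \<or> (n = 3 \<and> a = 1 \<and> x = 2 * pi / 3)"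
    then have "k = 0 \<or> (k = 1 \<and> x = 2*pi/3)" using k by auto
    then have FE: "F n x = sin x" using Fo by blast
    have "R = 0"
    proof (cases "n = 1")
      case True then show ?thesis unfolding R_def by (simp add: F_def)
    next
      case False
      then have a1: "a = 1" using c by auto
      show ?thesis unfolding R_def a1 using binom_m1 by simp
    qed
    then show "S n a x = sin x" using SR FE by simp
  qed
  show ?thesis using ge eq by blast
qed

end
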